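(* Let $\mathcal{G}=(V,L)$ be a finite connected undirected graph with monitor set $M$ and non-monitor set $N=V\setminus M$, $\sigma=|N|$, with measurement paths given by Controllable Simple-path Probing (CSP). A set $S\subseteq N$ is $\sigma$-identifiable if and only if each node in $S$ is adjacent to at least two monitors.
   Context: Under CSP, the measurement paths $P$ are all simple paths (no repeated nodes) in $\mathcal{G}$ between two distinct monitors. A failure set is any $F\subseteq N$; a path fails iff it traverses a node of $F$. $P_F$ is the set of paths in $P$ traversing a node of $F$; $F_1,F_2$ distinguishable iff $P_{F_1}\ne P_{F_2}$. $S\subseteq N$ is $k$-identifiable if any two failure sets $F_1,F_2$ with $|F_1|,|F_2|\le k$ and $F_1\cap S\ne F_2\cap S$ are distinguishable. *)

theory Defs
  imports Main
begin

definition finite_graph :: "'a set \<Rightarrow> ('a \<Rightarrow> 'a \<Rightarrow> bool) \<Rightarrow> bool" where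
  "finite_graph V E \<longleftrightarrow> finite V \<and> (\<forall>x y. E x y \<longrightarrow> x \<in> V \<and> y \<in> V)
     \<and> (\<forall>x y. E x y \<longrightarrow> E y x) \<and> (\<forall>x. \<not> E x x)"

definition connected_graph :: "'a set \<Rightarrow> ('a \<Rightarrow> 'a \<Rightarrow> bool) \<Rightarrow> bool" where
  "connected_graph V E \<longleftrightarrow> V \<noteq> {} \<and> (\<forall>x\<in>V. \<forall>y\<in>V. E\<^sup>*\<^sup>* x y)"

fun is_walk :: "('a \<Rightarrow> 'a \<Rightarrow> bool) \<Rightarrow> 'a list \<Rightarrow> bool" where
  "is_walk E [] = False"
| "is_walk E [x] = True"
| "is_walk E (x # y # xs) = (E x y \<and> is_walk E (y # xs))"

definition simple_path :: "'a set \<Rightarrow> ('a \<Rightarrow> 'a \<Rightarrow> bool) \<Rightarrow> 'a list \<Rightarrow> bool" where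
  "simple_path V E p \<longleftrightarrow> is_walk E p \<and> set p \<subseteq> V \<and> distinct p"

definition csp_paths :: "'a set \<Rightarrow> ('a \<Rightarrow> 'a \<Rightarrow> bool) \<Rightarrow> 'a set \<Rightarrow> 'a list set" where
  "csp_paths V E M = {p. simple_path V E p \<and> hd p \<in> M \<and> last p \<in> M \<and> hd p \<noteq> last p}"

definition failed_paths :: "'a list set \<Rightarrow> 'a set \<Rightarrow> 'a list set" where
  "failed_paths P F = {p \<in> P. set p \<inter> F \<noteq> {}}"

definition distinguishable :: "'a list set \<Rightarrow> 'a set \<Rightarrow> 'a set \<Rightarrow> bool" where
  "distinguishable P F1 F2 \<longleftrightarrow> failed_paths P F1 \<noteq> failed_paths P F2"

definition k_identifiable ::
  "'a set \<Rightarrow> ('a \<Rightarrow> 'a \<Rightarrow> bool) \<Rightarrow> 'a set \<Rightarrow> nat \<Rightarrow> 'a set \<Rightarrow> bool" where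
  "k_identifiable V E M k S \<longleftrightarrow>
     (\<forall>F1 F2. F1 \<subseteq> V - M \<longrightarrow> F2 \<subseteq> V - M \<longrightarrow> card F1 \<le> k \<longrightarrow> card F2 \<le> k \<longrightarrow>
        F1 \<inter> S \<noteq> F2 \<inter> S \<longrightarrow> distinguishable (csp_paths V E M) F1 F2)"

end

theory Submission
  imports Defs
begin

lemma walk_nth: "is_walk E p \<Longrightarrow> Suc i < length p \<Longrightarrow> E (p!i) (p!Suc i)"
proof (induction E p arbitrary: i rule: is_walk.induct)
  case (3 E x y xs)
  then show ?case by (cases i) auto
qed auto

lemma two_elems:
  assumes "2 \<le> card A" shows "\<exists>a b. a \<in> A \<and> b \<in> A \<and> a \<noteq> b"
proof (rule ccontr)
  assume "\<not> ?thesis"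
  hence "\<forall>a\<in>A. \<forall>b\<in>A. a = b" by blast
  hence "card A \<le> 1" using card_le_Suc0_iff_eq[of A] by (cases "finite A") auto
  with assms show False by simp
qed

lemma dist_one:
  assumes fg: "finite_graph V E" and M: "M \<subseteq> V" and F2: "F2 \<subseteq> V - M"
    and v: "v \<in> V - M" "v \<in> F1" "v \<notin> F2"
    and c: "2 \<le> card {m \<in> M. E v m}"
  shows "distinguishable (csp_paths V E M) F1 F2"
proof -
  obtain m1 m2 where m: "m1 \<in> M" "m2 \<in> M" "E v m1" "E v m2" "m1 \<noteq> m2"
    using two_elems[OF c] by blast
  have sym: "E m1 v" using m fg unfolding finite_graph_def by blast
  let ?p = "[m1, v, m2]"
  have "?p \<in> csp_paths V E M"
    unfolding csp_paths_def simple_path_def using m sym v M by auto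
  moreover have "set ?p \<inter> F2 = {}" using m v F2 by auto
  moreover have "set ?p \<inter> F1 \<noteq> {}" using v by auto
  ultimately have "?p \<in> failed_paths (csp_paths V E M) F1"
     "?p \<notin> failed_paths (csp_paths V E M) F2" unfolding failed_paths_def by auto
  thus ?thesis unfolding distinguishable_def by blast
qed

theorem proposition3:
  fixes V M S :: "'a set" and E :: "'a \<Rightarrow> 'a \<Rightarrow> bool"
  assumes "finite_graph V E" and "connected_graph V E"
    and "M \<subseteq> V" and "S \<subseteq> V - M"
  shows "k_identifiable V E M (card (V - M)) S \<longleftrightarrow>
         (\<forall>v\<in>S. card {m \<in> M. E v m} \<ge> 2)"
proof
  assume K: "k_identifiable V E M (card (V - M)) S"
  show "\<forall>v\<in>S. card {m \<in> M. E v m} \<ge> 2"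
  proof (rule ccontr)
    assume "\<not> ?thesis"
    then obtain v where vS: "v \<in> S" and c: "card {m \<in> M. E v m} < 2" by auto
    have finV: "finite V" using assms(1) unfolding finite_graph_def by blast
    have vN: "v \<in> V - M" using vS assms(4) by blast
    let ?N = "V - M"
    let ?P = "csp_paths V E M"
    have eq: "failed_paths ?P ?N = failed_paths ?P (?N - {v})"
    proof
      show "failed_paths ?P (?N - {v}) \<subseteq> failed_paths ?P ?N"
        unfolding failed_paths_def by blast
    next
      show "failed_paths ?P ?N \<subseteq> failed_paths ?P (?N - {v})"
      proof
        fix p assume pin: "p \<in> failed_paths ?P ?N"
        hence pP: "p \<in> ?P" and hit: "set p \<inter> ?N \<noteq> {}" unfolding failed_paths_def by auto
        have w: "is_walk E p" and sV: "set p \<subseteq> V" and d: "distinct p"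
          and h: "hd p \<in> M" and l: "last p \<in> M"
          using pP unfolding csp_paths_def simple_path_def by auto
        have ne: "p \<noteq> []" using w by auto
        show "p \<in> failed_paths ?P (?N - {v})"
        proof (rule ccontr)
          assume nf: "p \<notin> failed_paths ?P (?N - {v})"
          hence dis: "set p \<inter> (?N - {v}) = {}" using pP unfolding failed_paths_def by auto
          hence "v \<in> set p" using hit by blast
          then obtain i where i: "i < length p" "p ! i = v" by (meson in_set_conv_nth)
          have i0: "i \<noteq> 0" using i h vN ne by (metis DiffD2 hd_conv_nth)
          have il: "i \<noteq> length p - 1" using i l vN ne by (metis DiffD2 last_conv_nth)
          define a where "a = p ! (i - 1)"
          define b where "b = p ! Suc i"
          have Ea: "E a v" using walk_nth[OF w, of "i - 1"] i i0 unfolding a_def by simp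
          have Eva: "E v a" using Ea assms(1) unfolding finite_graph_def by blast
          have Evb: "E v b" using walk_nth[OF w, of i] i il unfolding b_def by simp
          have ab: "a \<noteq> b" using d i i0 il unfolding a_def b_def
            by (simp add: nth_eq_iff_index_eq)
          have aset: "a \<in> set p" using i unfolding a_def by simp
          have bset: "b \<in> set p" using i il unfolding b_def by simp
          have irr: "\<forall>x. \<not> E x x" using assms(1) unfolding finite_graph_def by blast
          have av: "a \<noteq> v" "b \<noteq> v" using Eva Evb irr by metis+
          have "a \<in> M \<and> b \<in> M" using dis aset bset av sV by blast
          hence "{a, b} \<subseteq> {m \<in> M. E v m}" using Eva Evb by auto
          moreover have "finite {m \<in> M. E v m}" using finV assms(3) by (simp add: finite_subset)
          ultimately have "card {a, b} \<le> card {m \<in> M. E v m}" by (rule card_mono[rotated])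
          with ab c show False by simp
        qed
      qed
    qed
    have "distinguishable ?P ?N (?N - {v})"
    proof -
      have c2: "card (?N - {v}) \<le> card ?N" using finV by (simp add: card_mono)
      have "?N \<inter> S \<noteq> (?N - {v}) \<inter> S" using vS vN by blast
      moreover have "?N \<subseteq> V - M" "?N - {v} \<subseteq> V - M" "card ?N \<le> card ?N" by auto
      ultimately show ?thesis using K c2 unfolding k_identifiable_def
        by (metis (no_types, lifting))
    qed
    with eq show False unfolding distinguishable_def by simp
  qed
next
  assume A: "\<forall>v\<in>S. card {m \<in> M. E v m} \<ge> 2"
  show "k_identifiable V E M (card (V - M)) S"
    unfolding k_identifiable_def
  proof (intro allI impI)
    fix F1 F2 assume F1: "F1 \<subseteq> V - M" and F2: "F2 \<subseteq> V - M" and "card F1 \<le> card (V - M)"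
      "card F2 \<le> card (V - M)" and ne: "F1 \<inter> S \<noteq> F2 \<inter> S"
    from ne obtain v where v: "v \<in> S" "(v \<in> F1 \<and> v \<notin> F2) \<or> (v \<in> F2 \<and> v \<notin> F1)" by blast
    have vN: "v \<in> V - M" using v assms(4) by blast
    show "distinguishable (csp_paths V E M) F1 F2"
      using v(2)
    proof
      assume "v \<in> F1 \<and> v \<notin> F2"
      thus ?thesis using dist_one[OF assms(1) assms(3) F2 vN, of F1] A v(1) by simp
    next
      assume "v \<in> F2 \<and> v \<notin> F1"
      hence "distinguishable (csp_paths V E M) F2 F1"
        using dist_one[OF assms(1) assms(3) F1 vN, of F2] A v(1) by simp
      thus ?thesis unfolding distinguishable_def by simp
    qed
  qed
qed

end
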